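(* Let $G_m$ be a parametric regulatory network, $R$ a well-formed set of influence constraints, and $T\subseteq\Delta(G_m)$ such that $p_R(T)\neq\emptyset$; let $L,U$ be the componentwise minimum and maximum of $p_R(T)$. For $v\in V$, $\omega\in\Omega_v$ and $\mathcal O\subseteq\Omega_v\times D_v$ define $l_{v,\omega}(\mathcal O)=\max(\{k\mid(\omega',k)\in\mathcal O,\ \omega'\prec_v\omega\}\cup\{L_{v,\omega}\})$ and $u_{v,\omega}(\mathcal O)=\min(\{k\mid(\omega',k)\in\mathcal O,\ \omega'\succ_v\omega\}\cup\{U_{v,\omega}\})$. Then for every $v\in V$, every pair of distinct $\omega,\omega'\in\Omega_v$, every $y\in\{L_{v,\omega},\dots,U_{v,\omega}\}$ and every $z\in\{l_{v,\omega'}(\{(\omega,y)\}),\dots,u_{v,\omega'}(\{(\omega,y)\})\}$: if there exists $\omega''\in\Omega_v\setminus\{\omega,\omega'\}$ with $l_{v,\omega''}(\{(\omega,y),(\omega',z)\})<u_{v,\omega''}(\{(\omega,y),(\omega',z)\})$, then there exists $P\in p_R(T)$ with $P_{v,\omega}=y$ and $P_{v,\omega'}=z$.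
   Context: An influence graph is $G=(V,I)$, $V=\{1,\dots,n\}$, $I\subseteq V\times V$; regulators $n^-(v)=\{u\mid(u,v)\in I\}$. $m\in\mathbb N^n$, $D_v=\{0,\dots,m_v\}$, PRN $G_m=(G,m)$. Regulator states $\Omega_v=\prod_{u\in n^-(v)}D_u$; $\omega[u\leftarrow k]$ replaces component $u$ of $\omega$ by $k$. Parametrisations: vectors $P\in\mathbb P(G_m)$ with coordinates $P_{v,\omega}\in D_v$ for $v\in V$, $\omega\in\Omega_v$, ordered componentwise. States $\prod_vD_v$; $\omega_v(x)$ projects a state $x$ onto the regulators of $v$. Transitions $\Delta(G_m)$: $x\xrightarrow{v,+}y$ ($y$ equals $x$ except $y_v=x_v+1\le m_v$) and $x\xrightarrow{v,-}y$ ($y_v=x_v-1\ge0$). $\mathcal P_{x\xrightarrow{v,+}y}=\{P\mid P_{v,\omega_v(x)}\ge x_v+1\}$, $\mathcal P_{x\xrightarrow{v,-}y}=\{P\mid P_{v,\omega_v(x)}\le x_v-1\}$; $p(\emptyset)=\mathbb P(G_m)$, $p(T)=\bigcap_{t\in T}\mathcal P_t$. $R\subseteq V\times V\times\{+1,-1,\mathrm o\}$ is well-formed if $u\in n^-(v)$ for all $(u,v,c)\in R$ and never both $(u,v,+1),(u,v,-1)\in R$. $\mathcal P_{(u,v,+1)}=\{P\mid\forall\omega\in\Omega_v\forall x_u\in\{1..m_u\}:P_{v,\omega[u\leftarrow x_u]}\ge P_{v,\omega[u\leftarrow x_u-1]}\}$, $\mathcal P_{(u,v,-1)}$ likewise with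 $\le$, $\mathcal P_{(u,v,\mathrm o)}=\{P\mid\exists\omega\in\Omega_v\exists x_u\in\{1..m_u\}:P_{v,\omega[u\leftarrow x_u]}\ne P_{v,\omega[u\leftarrow x_u-1]}\}$; $p_R(T)=p(T)\cap\bigcap_{r\in R}\mathcal P_r$. Order $\preceq_v$: $\omega\preceq_v\omega'$ iff for all $u\in n^-(v)$, $\omega_u\le\omega'_u$ if $(u,v,+1)\in R$, $\omega_u\ge\omega'_u$ if $(u,v,-1)\in R$, $\omega_u=\omega'_u$ otherwise; $\prec_v,\succ_v$ are the strict versions and their converses. *)

theory Defs
  imports Main
begin

text \<open>Vertices are V = {1..n}; the influence graph is I (a set of pairs), the
maximal activity levels are given by m. Parametrisations are
functions P v \<omega>, required to be zero outside the index set
{(v,\<omega>). v \<in> V, \<omega> \<in> \<Omega>_v} (extensionality), so that p(T) is a finite set.\<close>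

datatype sgn = Act | Inh | Obs   \<comment> \<open>+1, -1, o\<close>

definition Vset :: "nat \<Rightarrow> nat set" where
  "Vset n = {1..n}"

definition reg :: "(nat \<times> nat) set \<Rightarrow> nat \<Rightarrow> nat set" where
  "reg I v = {u. (u, v) \<in> I}"

definition Omega :: "(nat \<times> nat) set \<Rightarrow> (nat \<Rightarrow> nat) \<Rightarrow> nat \<Rightarrow> (nat \<Rightarrow> nat) set" where
  "Omega I m v = {\<omega>. (\<forall>u \<in> reg I v. \<omega> u \<le> m u) \<and> (\<forall>u. u \<notin> reg I v \<longrightarrow> \<omega> u = 0)}"

definition Params :: "nat \<Rightarrow> (nat \<times> nat) set \<Rightarrow> (nat \<Rightarrow> nat)
    \<Rightarrow> (nat \<Rightarrow> (nat \<Rightarrow> nat) \<Rightarrow> nat) set" where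
  "Params n I m = {P. \<forall>v \<omega>. (v \<in> Vset n \<and> \<omega> \<in> Omega I m v \<longrightarrow> P v \<omega> \<le> m v)
                          \<and> (\<not> (v \<in> Vset n \<and> \<omega> \<in> Omega I m v) \<longrightarrow> P v \<omega> = 0)}"

definition States :: "nat \<Rightarrow> (nat \<Rightarrow> nat) \<Rightarrow> (nat \<Rightarrow> nat) set" where
  "States n m = {x. \<forall>v. (v \<in> Vset n \<longrightarrow> x v \<le> m v) \<and> (v \<notin> Vset n \<longrightarrow> x v = 0)}"

definition omega_of :: "(nat \<times> nat) set \<Rightarrow> nat \<Rightarrow> (nat \<Rightarrow> nat) \<Rightarrow> (nat \<Rightarrow> nat)" where
  "omega_of I v x = (\<lambda>u. if u \<in> reg I v then x u else 0)"

text \<open>A transition (x, v, b, y): b = True means x -(v,+)-> y, b = False means x -(v,-)-> y.\<close>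
type_synonym trans = "(nat \<Rightarrow> nat) \<times> nat \<times> bool \<times> (nat \<Rightarrow> nat)"

definition Delta :: "nat \<Rightarrow> (nat \<Rightarrow> nat) \<Rightarrow> trans set" where
  "Delta n m = {(x, v, b, y). x \<in> States n m \<and> v \<in> Vset n \<and>
      (if b then x v + 1 \<le> m v \<and> y = x(v := x v + 1)
            else 1 \<le> x v \<and> y = x(v := x v - 1))}"

definition Ptrans :: "nat \<Rightarrow> (nat \<times> nat) set \<Rightarrow> (nat \<Rightarrow> nat) \<Rightarrow> trans
    \<Rightarrow> (nat \<Rightarrow> (nat \<Rightarrow> nat) \<Rightarrow> nat) set" where
  "Ptrans n I m t = (case t of (x, v, b, y) \<Rightarrow>
     {P \<in> Params n I m. if b then P v (omega_of I v x) \<ge> x v + 1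
                         else P v (omega_of I v x) + 1 \<le> x v})"

definition p :: "nat \<Rightarrow> (nat \<times> nat) set \<Rightarrow> (nat \<Rightarrow> nat) \<Rightarrow> trans set
    \<Rightarrow> (nat \<Rightarrow> (nat \<Rightarrow> nat) \<Rightarrow> nat) set" where
  "p n I m T = {P \<in> Params n I m. \<forall>t \<in> T. P \<in> Ptrans n I m t}"

definition well_formed :: "(nat \<times> nat) set \<Rightarrow> (nat \<times> nat \<times> sgn) set \<Rightarrow> bool" where
  "well_formed I R \<longleftrightarrow> (\<forall>(u, v, c) \<in> R. u \<in> reg I v) \<and>
      (\<forall>u v. \<not> ((u, v, Act) \<in> R \<and> (u, v, Inh) \<in> R))"

definition Pconstr :: "nat \<Rightarrow> (nat \<times> nat) set \<Rightarrow> (nat \<Rightarrow> nat) \<Rightarrow> nat \<times> nat \<times> sgn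
    \<Rightarrow> (nat \<Rightarrow> (nat \<Rightarrow> nat) \<Rightarrow> nat) set" where
  "Pconstr n I m r = (case r of (u, v, c) \<Rightarrow>
     (case c of
        Act \<Rightarrow> {P \<in> Params n I m. \<forall>\<omega> \<in> Omega I m v. \<forall>k \<in> {1..m u}.
                   P v (\<omega>(u := k)) \<ge> P v (\<omega>(u := k - 1))}
      | Inh \<Rightarrow> {P \<in> Params n I m. \<forall>\<omega> \<in> Omega I m v. \<forall>k \<in> {1..m u}.
                   P v (\<omega>(u := k)) \<le> P v (\<omega>(u := k - 1))}
      | Obs \<Rightarrow> {P \<in> Params n I m. \<exists>\<omega> \<in> Omega I m v. \<exists>k \<in> {1..m u}.
                   P v (\<omega>(u := k)) \<noteq> P v (\<omega>(u := k - 1))}))"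

definition pR :: "nat \<Rightarrow> (nat \<times> nat) set \<Rightarrow> (nat \<Rightarrow> nat) \<Rightarrow> (nat \<times> nat \<times> sgn) set
    \<Rightarrow> trans set \<Rightarrow> (nat \<Rightarrow> (nat \<Rightarrow> nat) \<Rightarrow> nat) set" where
  "pR n I m R T = p n I m T \<inter> {P. \<forall>r \<in> R. P \<in> Pconstr n I m r}"

definition preceq :: "(nat \<times> nat) set \<Rightarrow> (nat \<times> nat \<times> sgn) set \<Rightarrow> nat
    \<Rightarrow> (nat \<Rightarrow> nat) \<Rightarrow> (nat \<Rightarrow> nat) \<Rightarrow> bool" where
  "preceq I R v \<omega> \<omega>' \<longleftrightarrow> (\<forall>u \<in> reg I v.
      (if (u, v, Act) \<in> R then \<omega> u \<le> \<omega>' u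
       else if (u, v, Inh) \<in> R then \<omega> u \<ge> \<omega>' u
       else \<omega> u = \<omega>' u))"

definition prec :: "(nat \<times> nat) set \<Rightarrow> (nat \<times> nat \<times> sgn) set \<Rightarrow> nat
    \<Rightarrow> (nat \<Rightarrow> nat) \<Rightarrow> (nat \<Rightarrow> nat) \<Rightarrow> bool" where
  "prec I R v \<omega> \<omega>' \<longleftrightarrow> preceq I R v \<omega> \<omega>' \<and> \<omega> \<noteq> \<omega>'"

definition Lb where
  "Lb n I m R T v \<omega> = Min {P v \<omega> | P. P \<in> pR n I m R T}"

definition Ub where
  "Ub n I m R T v \<omega> = Max {P v \<omega> | P. P \<in> pR n I m R T}"

definition lo :: "nat \<Rightarrow> (nat \<times> nat) set \<Rightarrow> (nat \<Rightarrow> nat) \<Rightarrow> (nat \<times> nat \<times> sgn) set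
    \<Rightarrow> trans set \<Rightarrow> nat \<Rightarrow> (nat \<Rightarrow> nat) \<Rightarrow> ((nat \<Rightarrow> nat) \<times> nat) set \<Rightarrow> nat" where
  "lo n I m R T v \<omega> Ob = Max ({k. \<exists>\<omega>'. (\<omega>', k) \<in> Ob \<and> prec I R v \<omega>' \<omega>} \<union> {Lb n I m R T v \<omega>})"

definition up :: "nat \<Rightarrow> (nat \<times> nat) set \<Rightarrow> (nat \<Rightarrow> nat) \<Rightarrow> (nat \<times> nat \<times> sgn) set
    \<Rightarrow> trans set \<Rightarrow> nat \<Rightarrow> (nat \<Rightarrow> nat) \<Rightarrow> ((nat \<Rightarrow> nat) \<times> nat) set \<Rightarrow> nat" where
  "up n I m R T v \<omega> Ob = Min ({k. \<exists>\<omega>'. (\<omega>', k) \<in> Ob \<and> prec I R v \<omega> \<omega>'} \<union> {Ub n I m R T v \<omega>})"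

end

theory Submission
  imports Defs
begin

lemma Omega_upd: "a \<in> Omega I m v \<Longrightarrow> u \<in> reg I v \<Longrightarrow> k \<le> m u \<Longrightarrow> a(u:=k) \<in> Omega I m v"
  by (auto simp: Omega_def)

lemma Omega_bnd: "a \<in> Omega I m v \<Longrightarrow> u \<in> reg I v \<Longrightarrow> a u \<le> m u"
  by (auto simp: Omega_def)

lemma Omega_eq: "a \<in> Omega I m v \<Longrightarrow> b \<in> Omega I m v \<Longrightarrow> (\<forall>u\<in>reg I v. a u = b u) \<Longrightarrow> a = b"
  by (rule ext) (auto simp: Omega_def)

lemma preceq_refl: "preceq I R v a a"
  by (auto simp: preceq_def)

lemma preceq_trans: "preceq I R v a b \<Longrightarrow> preceq I R v b c \<Longrightarrow> preceq I R v a c"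
  unfolding preceq_def
proof (intro ballI)
  fix u assume A: "\<forall>u\<in>reg I v. if (u, v, Act) \<in> R then a u \<le> b u else if (u, v, Inh) \<in> R then b u \<le> a u else a u = b u"
    and B: "\<forall>u\<in>reg I v. if (u, v, Act) \<in> R then b u \<le> c u else if (u, v, Inh) \<in> R then c u \<le> b u else b u = c u"
    and u: "u \<in> reg I v"
  from A u have a: "if (u, v, Act) \<in> R then a u \<le> b u else if (u, v, Inh) \<in> R then b u \<le> a u else a u = b u" by blast
  from B u have b: "if (u, v, Act) \<in> R then b u \<le> c u else if (u, v, Inh) \<in> R then c u \<le> b u else b u = c u" by blast
  show "if (u, v, Act) \<in> R then a u \<le> c u else if (u, v, Inh) \<in> R then c u \<le> a u else a u = c u"
    using a b by (auto split: if_splits)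
qed

lemma preceq_antisym: "a \<in> Omega I m v \<Longrightarrow> b \<in> Omega I m v \<Longrightarrow> preceq I R v a b \<Longrightarrow> preceq I R v b a \<Longrightarrow> a = b"
  apply (rule Omega_eq, assumption, assumption)
  apply (auto simp: preceq_def)
  apply (drule_tac x=u in bspec, assumption)+
  apply (auto split: if_splits)
  done

lemma prec_trans1: "a \<in> Omega I m v \<Longrightarrow> b \<in> Omega I m v \<Longrightarrow> c \<in> Omega I m v \<Longrightarrow>
   prec I R v a b \<Longrightarrow> preceq I R v b c \<Longrightarrow> prec I R v a c"
  unfolding prec_def using preceq_trans preceq_antisym by metis

lemma prec_trans2: "a \<in> Omega I m v \<Longrightarrow> b \<in> Omega I m v \<Longrightarrow> c \<in> Omega I m v \<Longrightarrow>
   preceq I R v a b \<Longrightarrow> prec I R v b c \<Longrightarrow> prec I R v a c"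
  unfolding prec_def using preceq_trans preceq_antisym by metis

lemma prec_irrefl: "\<not> prec I R v a a" by (simp add: prec_def)

lemma prec_asym: "a \<in> Omega I m v \<Longrightarrow> b \<in> Omega I m v \<Longrightarrow> prec I R v a b \<Longrightarrow> \<not> prec I R v b a"
  unfolding prec_def using preceq_antisym by metis

lemma sum_less_single:
  fixes g h :: "'a \<Rightarrow> nat"
  assumes "finite A" "u \<in> A" "g u < h u" "\<forall>x\<in>A-{u}. g x = h x"
  shows "sum g A < sum h A"
proof -
  have "sum g A = g u + sum g (A - {u})" using assms by (simp add: sum.remove)
  moreover have "sum h A = h u + sum h (A - {u})" using assms by (simp add: sum.remove)
  moreover have "sum g (A - {u}) = sum h (A - {u})" using assms(4) by (auto intro: sum.cong)
  ultimately show ?thesis using assms(3) by simp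
qed

lemma mono_path:
  fixes f :: "(nat \<Rightarrow> nat) \<Rightarrow> nat"
  assumes fin: "finite (reg I v)" and wf: "well_formed I R"
  and act: "\<And>u w k. (u,v,Act) \<in> R \<Longrightarrow> w \<in> Omega I m v \<Longrightarrow> k \<in> {1..m u} \<Longrightarrow> f (w(u:=k-1)) \<le> f (w(u:=k))"
  and inh: "\<And>u w k. (u,v,Inh) \<in> R \<Longrightarrow> w \<in> Omega I m v \<Longrightarrow> k \<in> {1..m u} \<Longrightarrow> f (w(u:=k)) \<le> f (w(u:=k-1))"
  shows "a \<in> Omega I m v \<Longrightarrow> b \<in> Omega I m v \<Longrightarrow> preceq I R v a b \<Longrightarrow> f a \<le> f b"
proof (induction "\<Sum>u\<in>reg I v. (a u - b u) + (b u - a u)" arbitrary: a rule: less_induct)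
  case (less a)
  show ?case
  proof (cases "\<forall>u\<in>reg I v. a u = b u")
    case True then have "a = b" using Omega_eq less.prems by blast
    thus ?thesis by simp
  next
    case False then obtain u where u: "u \<in> reg I v" "a u \<noteq> b u" by auto
    have bu: "b u \<le> m u" using Omega_bnd less.prems(2) u(1) by blast
    have au: "a u \<le> m u" using Omega_bnd less.prems(1) u(1) by blast
    have pu: "if (u, v, Act) \<in> R then a u \<le> b u else if (u, v, Inh) \<in> R then b u \<le> a u else a u = b u"
      using less.prems(3) u(1) unfolding preceq_def by blast
    show ?thesis
    proof (cases "(u,v,Act) \<in> R")
      case True
      have lt: "a u < b u" using pu u True by auto
      define a' where "a' = a(u := a u + 1)"
      have a'O: "a' \<in> Omega I m v" unfolding a'_def using Omega_upd[OF less.prems(1) u(1)] lt bu by simp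
      have pa': "preceq I R v a' b" using less.prems(3) lt True unfolding preceq_def a'_def by auto
      have "f (a'(u := (a u + 1) - 1)) \<le> f (a'(u := a u + 1))"
        using act[OF True a'O, of "a u + 1"] lt bu by simp
      hence 1: "f a \<le> f a'" unfolding a'_def by simp
      have "(\<Sum>u\<in>reg I v. (a' u - b u) + (b u - a' u)) < (\<Sum>u\<in>reg I v. (a u - b u) + (b u - a u))"
        by (rule sum_less_single[OF fin u(1)]) (use lt in \<open>auto simp: a'_def\<close>)
      hence "f a' \<le> f b" using less.hyps a'O less.prems(2) pa' by blast
      thus ?thesis using 1 by simp
    next
      case nA: False
      show ?thesis
      proof (cases "(u,v,Inh) \<in> R")
        case True
        have lt: "b u < a u" using pu u True nA by auto
        define a' where "a' = a(u := a u - 1)"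
        have a'O: "a' \<in> Omega I m v" unfolding a'_def using Omega_upd[OF less.prems(1) u(1)] au by simp
        have pa': "preceq I R v a' b" using less.prems(3) lt True nA unfolding preceq_def a'_def by auto
        have "f (a(u := a u)) \<le> f (a(u := a u - 1))"
          using inh[OF True less.prems(1), of "a u"] lt au by simp
        hence 1: "f a \<le> f a'" unfolding a'_def by simp
        have "(\<Sum>u\<in>reg I v. (a' u - b u) + (b u - a' u)) < (\<Sum>u\<in>reg I v. (a u - b u) + (b u - a u))"
          by (rule sum_less_single[OF fin u(1)]) (use lt in \<open>auto simp: a'_def\<close>)
        hence "f a' \<le> f b" using less.hyps a'O less.prems(2) pa' by blast
        thus ?thesis using 1 by simp
      next
        case False
        then show ?thesis using pu nA u by simp
      qed
    qed
  qed
qed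

definition dep :: "(nat \<times> nat) set \<Rightarrow> (nat \<Rightarrow> nat) \<Rightarrow> nat \<Rightarrow> ((nat \<Rightarrow> nat) \<Rightarrow> nat) \<Rightarrow> nat \<Rightarrow> bool" where
  "dep I m v F u \<longleftrightarrow> (\<exists>w\<in>Omega I m v. \<exists>k\<in>{1..m u}. F (w(u:=k)) \<noteq> F (w(u:=k-1)))"

lemma indep_const:
  assumes "\<not> dep I m v F u" "u \<in> reg I v" "a \<in> Omega I m v" "k \<le> m u"
  shows "F (a(u:=k)) = F a"
proof -
  have "\<forall>j. j \<le> m u \<longrightarrow> F (a(u:=j)) = F (a(u:=0))"
  proof (intro allI)
    fix j show "j \<le> m u \<longrightarrow> F (a(u:=j)) = F (a(u:=0))"
    proof (induction j)
      case 0 then show ?case by simp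
    next
      case (Suc j)
      show ?case
      proof
        assume h: "Suc j \<le> m u"
        have "\<forall>w\<in>Omega I m v. \<forall>k\<in>{1..m u}. F (w(u:=k)) = F (w(u:=k-1))"
          using assms(1) unfolding dep_def by blast
        moreover have "Suc j \<in> {1..m u}" using h by simp
        ultimately have "F (a(u:=Suc j)) = F (a(u:=Suc j - 1))" using assms(3) by blast
        also have "\<dots> = F (a(u:=0))" using Suc.IH h by (metis Suc_leD diff_Suc_1)
        finally show "F (a(u:=Suc j)) = F (a(u:=0))" .
      qed
    qed
  qed
  moreover have "a u \<le> m u" using Omega_bnd assms by blast
  ultimately have "F (a(u:=k)) = F (a(u:=0))" "F (a(u:=a u)) = F (a(u:=0))" using assms(4) by blast+
  then show ?thesis by simp
qed

definition rk :: "(nat \<times> nat) set \<Rightarrow> (nat \<times> nat \<times> sgn) set \<Rightarrow> (nat \<Rightarrow> nat) \<Rightarrow> nat \<Rightarrow> (nat \<Rightarrow> nat) \<Rightarrow> nat" where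
  "rk I R m v w = (\<Sum>u\<in>reg I v. if (u,v,Act)\<in>R then w u else if (u,v,Inh)\<in>R then m u - w u else 0)"

lemma rk_less:
  assumes fin: "finite (reg I v)" and a: "a \<in> Omega I m v" and b: "b \<in> Omega I m v" and p: "prec I R v a b"
  shows "rk I R m v a < rk I R m v b"
  unfolding rk_def
proof (rule sum_strict_mono_ex1[OF fin])
  have pe: "preceq I R v a b" and ne: "a \<noteq> b" using p by (auto simp: prec_def)
  show "\<forall>u\<in>reg I v. (if (u,v,Act)\<in>R then a u else if (u,v,Inh)\<in>R then m u - a u else 0)
     \<le> (if (u,v,Act)\<in>R then b u else if (u,v,Inh)\<in>R then m u - b u else 0)"
  proof
    fix u assume u: "u \<in> reg I v"
    have "if (u, v, Act) \<in> R then a u \<le> b u else if (u, v, Inh) \<in> R then b u \<le> a u else a u = b u"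
      using pe u unfolding preceq_def by blast
    then show "(if (u,v,Act)\<in>R then a u else if (u,v,Inh)\<in>R then m u - a u else 0)
     \<le> (if (u,v,Act)\<in>R then b u else if (u,v,Inh)\<in>R then m u - b u else 0)"
      by (auto split: if_splits)
  qed
  obtain u where u: "u \<in> reg I v" "a u \<noteq> b u" using Omega_eq[OF a b] ne by blast
  have pu: "if (u, v, Act) \<in> R then a u \<le> b u else if (u, v, Inh) \<in> R then b u \<le> a u else a u = b u"
    using pe u unfolding preceq_def by blast
  have "a u \<le> m u" using Omega_bnd a u by blast
  then show "\<exists>u\<in>reg I v. (if (u,v,Act)\<in>R then a u else if (u,v,Inh)\<in>R then m u - a u else 0)
     < (if (u,v,Act)\<in>R then b u else if (u,v,Inh)\<in>R then m u - b u else 0)"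
    using u pu by (intro bexI[of _ u]) (auto split: if_splits)
qed

lemma rk_bnd:
  assumes "a \<in> Omega I m v"
  shows "rk I R m v a < Suc (\<Sum>u\<in>reg I v. m u)"
proof -
  have "rk I R m v a \<le> (\<Sum>u\<in>reg I v. m u)"
    unfolding rk_def
  proof (rule sum_mono)
    fix u assume "u \<in> reg I v"
    then have "a u \<le> m u" using Omega_bnd assms by blast
    then show "(if (u,v,Act)\<in>R then a u else if (u,v,Inh)\<in>R then m u - a u else 0) \<le> m u" by auto
  qed
  then show ?thesis by simp
qed

lemma core:
  assumes fin: "finite (reg I v)"
  and mlo: "\<forall>a\<in>Omega I m v. \<forall>b\<in>Omega I m v. preceq I R v a b \<longrightarrow> fl a \<le> fl b"
  and mhi: "\<forall>a\<in>Omega I m v. \<forall>b\<in>Omega I m v. preceq I R v a b \<longrightarrow> fh a \<le> fh b"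
  and le: "\<forall>a\<in>Omega I m v. fl a \<le> fh a"
  and xs: "xs \<in> Omega I m v" "fl xs < fh xs"
  and obs: "\<And>u. (u,v,Obs)\<in>R \<Longrightarrow> u \<in> reg I v \<and> 1 \<le> m u"
  shows "\<exists>F. (\<forall>a\<in>Omega I m v. \<forall>b\<in>Omega I m v. preceq I R v a b \<longrightarrow> F a \<le> F b)
           \<and> (\<forall>a\<in>Omega I m v. fl a \<le> F a \<and> F a \<le> fh a)
           \<and> (\<forall>u. (u,v,Obs)\<in>R \<longrightarrow> dep I m v F u)"
proof (cases "\<forall>u. (u,v,Obs)\<in>R \<longrightarrow> dep I m v fl u")
  case True then show ?thesis using mlo le by (intro exI[of _ fl]) auto
next
  case False
  then obtain u0 where u0: "(u0,v,Obs)\<in>R" "\<not> dep I m v fl u0" by auto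
  have "\<exists>x. (x \<in> Omega I m v \<and> fl x < fh x) \<and> (\<forall>y. (y \<in> Omega I m v \<and> fl y < fh y) \<longrightarrow> rk I R m v y \<le> rk I R m v x)"
    by (rule Lattices_Big.ex_has_greatest_nat[of "\<lambda>y. y \<in> Omega I m v \<and> fl y < fh y" xs "rk I R m v" "Suc (\<Sum>u\<in>reg I v. m u)"])
       (use xs rk_bnd in auto)
  then obtain x where x: "x \<in> Omega I m v" "fl x < fh x"
    and xmax: "\<And>y. y \<in> Omega I m v \<Longrightarrow> fl y < fh y \<Longrightarrow> rk I R m v y \<le> rk I R m v x" by blast
  define F where "F = fl(x := fl x + 1)"
  have Fmono: "\<forall>a\<in>Omega I m v. \<forall>b\<in>Omega I m v. preceq I R v a b \<longrightarrow> F a \<le> F b"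
  proof (intro ballI impI)
    fix a b assume a: "a \<in> Omega I m v" and b: "b \<in> Omega I m v" and ab: "preceq I R v a b"
    show "F a \<le> F b"
    proof (cases "a = b")
      case True then show ?thesis by simp
    next
      case ne: False
      show ?thesis
      proof (cases "a = x")
        case True
        have "rk I R m v x < rk I R m v b" using rk_less[OF fin a b] ab ne True by (simp add: prec_def)
        then have "\<not> fl b < fh b" using xmax[OF b] by fastforce
        moreover have "fh x \<le> fh b" using mhi x(1) b ab True by blast
        ultimately show ?thesis using True ne x(2) F_def by auto
      next
        case nax: False
        show ?thesis
        proof (cases "b = x")
          case True then show ?thesis using mlo a b ab nax F_def by fastforce
        next
          case False then show ?thesis using mlo a b ab nax F_def by auto
        qed
      qed
    qed
  qed
  have Fb: "\<forall>a\<in>Omega I m v. fl a \<le> F a \<and> F a \<le> fh a" using le x F_def by auto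
  have Fdep: "\<forall>w. (w,v,Obs)\<in>R \<longrightarrow> dep I m v F w"
  proof (intro allI impI, rule ccontr)
    fix w assume wO: "(w,v,Obs)\<in>R" and nd: "\<not> dep I m v F w"
    have u0r: "u0 \<in> reg I v" "1 \<le> m u0" using obs u0(1) by auto
    have wr: "w \<in> reg I v" "1 \<le> m w" using obs wO by auto
    define k1 where "k1 = (if x u0 = 0 then 1 else (0::nat))"
    have k1: "k1 \<le> m u0" "k1 \<noteq> x u0" using u0r unfolding k1_def by auto
    have xk1: "x(u0:=k1) \<in> Omega I m v" using Omega_upd x(1) u0r k1 by blast
    have Fk1: "F (x(u0:=k1)) = fl x"
    proof -
      have "x(u0:=k1) \<noteq> x" using k1 by (metis fun_upd_same)
      then have "F (x(u0:=k1)) = fl (x(u0:=k1))" by (simp add: F_def)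
      also have "\<dots> = fl x" using indep_const[OF u0(2) u0r(1) x(1) k1(1)] .
      finally show ?thesis .
    qed
    show False
    proof (cases "w = u0")
      case True
      have "F (x(u0:=k1)) = F x" using indep_const[OF nd wr(1) x(1)] True k1 by simp
      then show False using Fk1 by (simp add: F_def)
    next
      case wne: False
      define k2 where "k2 = (if x w = 0 then 1 else (0::nat))"
      have k2: "k2 \<le> m w" "k2 \<noteq> x w" using wr unfolding k2_def by auto
      define q where "q = x(u0:=k1, w:=k2)"
      have qO: "q \<in> Omega I m v" unfolding q_def using Omega_upd xk1 wr k2 by blast
      have xk2: "x(w:=k2) \<in> Omega I m v" using Omega_upd x(1) wr k2 by blast
      have qx: "q \<noteq> x" unfolding q_def using k1 wne by (metis fun_upd_apply)
      have 1: "F q = fl q" using qx by (simp add: F_def)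
      have q1: "q(u0 := x u0) = x(w:=k2)" unfolding q_def using wne by (auto simp: fun_upd_twist)
      have 2: "fl q = fl (x(w:=k2))"
        using indep_const[OF u0(2) u0r(1) qO, of "x u0"] Omega_bnd[OF x(1) u0r(1)] q1 by simp
      have "x(w:=k2) \<noteq> x" using k2 by (metis fun_upd_same)
      then have 3: "F (x(w:=k2)) = fl (x(w:=k2))" by (simp add: F_def)
      have 4: "F (x(w:=k2)) = F x" using indep_const[OF nd wr(1) x(1) k2(1)] .
      have q2: "q(w := x w) = x(u0:=k1)" unfolding q_def using wne by (auto simp: fun_eq_iff)
      have 5: "F q = F (x(u0:=k1))"
        using indep_const[OF nd wr(1) qO, of "x w"] Omega_bnd[OF x(1) wr(1)] q2 by simp
      have "F q = fl x + 1" using 1 2 3 4 by (simp add: F_def)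
      then show False using 5 Fk1 by simp
    qed
  qed
  show ?thesis using Fmono Fb Fdep by blast
qed

lemma wf_reg: "well_formed I R \<Longrightarrow> (u,v,c)\<in>R \<Longrightarrow> u \<in> reg I v"
  unfolding well_formed_def by fast

lemma wf_notboth: "well_formed I R \<Longrightarrow> (u,v,Inh)\<in>R \<Longrightarrow> (u,v,Act)\<notin>R"
  unfolding well_formed_def by blast

lemma fin_reg: "I \<subseteq> Vset n \<times> Vset n \<Longrightarrow> finite (reg I v)"
  by (rule finite_subset[of _ "{1..n}"]) (auto simp: reg_def Vset_def)

lemma pR_Params: "P \<in> pR n I m R T \<Longrightarrow> P \<in> Params n I m"
  by (auto simp: pR_def p_def)

lemma pR_trans: "P \<in> pR n I m R T \<Longrightarrow> t \<in> T \<Longrightarrow> P \<in> Ptrans n I m t"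
  by (auto simp: pR_def p_def)

lemma pR_constr: "P \<in> pR n I m R T \<Longrightarrow> r \<in> R \<Longrightarrow> P \<in> Pconstr n I m r"
  by (auto simp: pR_def)

lemma Params_bnd: "P \<in> Params n I m \<Longrightarrow> P v w \<le> m v"
  unfolding Params_def by (cases "v \<in> Vset n \<and> w \<in> Omega I m v") auto

lemma vals_fin: "finite {P v w |P. P \<in> pR n I m R T}"
  by (rule finite_subset[of _ "{..m v}"]) (auto dest: pR_Params Params_bnd)

lemma Lb_le: "P \<in> pR n I m R T \<Longrightarrow> Lb n I m R T v w \<le> P v w"
  unfolding Lb_def by (rule Min_le[OF vals_fin]) auto

lemma Ub_ge: "P \<in> pR n I m R T \<Longrightarrow> P v w \<le> Ub n I m R T v w"
  unfolding Ub_def by (rule Max_ge[OF vals_fin]) auto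

lemma Lb_ex: "pR n I m R T \<noteq> {} \<Longrightarrow> \<exists>P\<in>pR n I m R T. P v w = Lb n I m R T v w"
proof -
  assume "pR n I m R T \<noteq> {}"
  then have "{P v w |P. P \<in> pR n I m R T} \<noteq> {}" by auto
  from Min_in[OF vals_fin this] show ?thesis unfolding Lb_def by auto
qed

lemma Ub_ex: "pR n I m R T \<noteq> {} \<Longrightarrow> \<exists>P\<in>pR n I m R T. P v w = Ub n I m R T v w"
proof -
  assume "pR n I m R T \<noteq> {}"
  then have "{P v w |P. P \<in> pR n I m R T} \<noteq> {}" by auto
  from Max_in[OF vals_fin this] show ?thesis unfolding Ub_def by auto
qed

lemma lo_le_iff:
  assumes "finite Ob"
  shows "lo n I m R T v x Ob \<le> c \<longleftrightarrow> Lb n I m R T v x \<le> c \<and> (\<forall>(w,k)\<in>Ob. prec I R v w x \<longrightarrow> k \<le> c)"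
proof -
  have "finite ({k. \<exists>w. (w, k) \<in> Ob \<and> prec I R v w x} \<union> {Lb n I m R T v x})"
    by (rule finite_subset[of _ "snd ` Ob \<union> {Lb n I m R T v x}"]) (use assms in \<open>auto intro: rev_image_eqI\<close>)
  then show ?thesis unfolding lo_def by (subst Max_le_iff) auto
qed

lemma le_up_iff:
  assumes "finite Ob"
  shows "c \<le> up n I m R T v x Ob \<longleftrightarrow> c \<le> Ub n I m R T v x \<and> (\<forall>(w,k)\<in>Ob. prec I R v x w \<longrightarrow> c \<le> k)"
proof -
  have "finite ({k. \<exists>w. (w, k) \<in> Ob \<and> prec I R v x w} \<union> {Ub n I m R T v x})"
    by (rule finite_subset[of _ "snd ` Ob \<union> {Ub n I m R T v x}"]) (use assms in \<open>auto intro: rev_image_eqI\<close>)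
  then show ?thesis unfolding up_def by (subst Min_ge_iff) auto
qed

lemma P_mono:
  assumes "I \<subseteq> Vset n \<times> Vset n" "well_formed I R" "P \<in> pR n I m R T"
    "a \<in> Omega I m v" "b \<in> Omega I m v" "preceq I R v a b"
  shows "P v a \<le> P v b"
proof (rule mono_path[OF fin_reg[OF assms(1)] assms(2) _ _ assms(4-6), of "P v"])
  fix u w k assume "(u,v,Act)\<in>R" "w \<in> Omega I m v" "k \<in> {1..m u}"
  then show "P v (w(u := k - 1)) \<le> P v (w(u := k))"
    using pR_constr[OF assms(3)] unfolding Pconstr_def by fastforce
next
  fix u w k assume "(u,v,Inh)\<in>R" "w \<in> Omega I m v" "k \<in> {1..m u}"
  then show "P v (w(u := k)) \<le> P v (w(u := k - 1))"
    using pR_constr[OF assms(3)] unfolding Pconstr_def by fastforce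
qed

lemma trans_transfer:
  "P1 \<in> Ptrans n I m (x,v,b,y) \<Longrightarrow> P2 \<in> Ptrans n I m (x,v,b,y) \<Longrightarrow> Q \<in> Params n I m \<Longrightarrow>
   P1 v (omega_of I v x) \<le> Q v (omega_of I v x) \<Longrightarrow> Q v (omega_of I v x) \<le> P2 v (omega_of I v x) \<Longrightarrow>
   Q \<in> Ptrans n I m (x,v,b,y)"
  by (auto simp: Ptrans_def split: if_splits)

lemma trans_same:
  "P \<in> Ptrans n I m (x,v,b,y) \<Longrightarrow> Q \<in> Params n I m \<Longrightarrow> Q v = P v \<Longrightarrow> Q \<in> Ptrans n I m (x,v,b,y)"
  by (auto simp: Ptrans_def)

lemma constr_same:
  "P \<in> Pconstr n I m (u,v,c) \<Longrightarrow> Q \<in> Params n I m \<Longrightarrow> Q v = P v \<Longrightarrow> Q \<in> Pconstr n I m (u,v,c)"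
  by (cases c) (auto simp: Pconstr_def)

lemma step_act: "(u,v,Act) \<in> R \<Longrightarrow> preceq I R v (w(u:=k-1)) (w(u:=k))"
  by (auto simp: preceq_def)

lemma step_inh: "(u,v,Inh) \<in> R \<Longrightarrow> (u,v,Act) \<notin> R \<Longrightarrow> preceq I R v (w(u:=k)) (w(u:=k-1))"
  by (auto simp: preceq_def)

theorem theorem3:
  fixes n :: nat and I :: "(nat \<times> nat) set" and m :: "nat \<Rightarrow> nat"
    and R :: "(nat \<times> nat \<times> sgn) set" and T :: "trans set"
  assumes "I \<subseteq> Vset n \<times> Vset n"
    and "well_formed I R"
    and "T \<subseteq> Delta n m"
    and "pR n I m R T \<noteq> {}"
  shows "\<forall>v \<in> Vset n. \<forall>\<omega> \<in> Omega I m v. \<forall>\<omega>' \<in> Omega I m v. \<omega> \<noteq> \<omega>' \<longrightarrow>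
    (\<forall>y \<in> {Lb n I m R T v \<omega> .. Ub n I m R T v \<omega>}.
     \<forall>z \<in> {lo n I m R T v \<omega>' {(\<omega>, y)} .. up n I m R T v \<omega>' {(\<omega>, y)}}.
       (\<exists>\<omega>'' \<in> Omega I m v - {\<omega>, \<omega>'}.
           lo n I m R T v \<omega>'' {(\<omega>, y), (\<omega>', z)} < up n I m R T v \<omega>'' {(\<omega>, y), (\<omega>', z)})
       \<longrightarrow> (\<exists>P \<in> pR n I m R T. P v \<omega> = y \<and> P v \<omega>' = z))"
proof (intro ballI impI)
  fix v \<omega> \<omega>' y z
  assume v: "v \<in> Vset n" and w1: "\<omega> \<in> Omega I m v" and w2: "\<omega>' \<in> Omega I m v" and ne: "\<omega> \<noteq> \<omega>'"
    and y: "y \<in> {Lb n I m R T v \<omega> .. Ub n I m R T v \<omega>}"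
    and z: "z \<in> {lo n I m R T v \<omega>' {(\<omega>, y)} .. up n I m R T v \<omega>' {(\<omega>, y)}}"
    and ex: "\<exists>\<omega>'' \<in> Omega I m v - {\<omega>, \<omega>'}.
           lo n I m R T v \<omega>'' {(\<omega>, y), (\<omega>', z)} < up n I m R T v \<omega>'' {(\<omega>, y), (\<omega>', z)}"
  define S where "S = pR n I m R T"
  define L where "L = Lb n I m R T v"
  define U where "U = Ub n I m R T v"
  define \<Omega> where "\<Omega> = Omega I m v"
  define Ob where "Ob = {(\<omega>, y), (\<omega>', z)}"
  have Sne: "S \<noteq> {}" using assms(4) S_def by simp
  obtain P0 where P0: "P0 \<in> S" using Sne by blast
  have Lle: "\<And>P w. P \<in> S \<Longrightarrow> L w \<le> P v w" using Lb_le S_def L_def by blast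
  have Uge: "\<And>P w. P \<in> S \<Longrightarrow> P v w \<le> U w" using Ub_ge S_def U_def by blast
  have Lex: "\<And>w. \<exists>P\<in>S. P v w = L w" using Lb_ex Sne S_def L_def by blast
  have Uex: "\<And>w. \<exists>P\<in>S. P v w = U w" using Ub_ex Sne S_def U_def by blast
  have Pm: "\<And>P a b. P \<in> S \<Longrightarrow> a \<in> \<Omega> \<Longrightarrow> b \<in> \<Omega> \<Longrightarrow> preceq I R v a b \<Longrightarrow> P v a \<le> P v b"
    using P_mono[OF assms(1,2)] S_def \<Omega>_def by blast
  have LU: "\<And>w. L w \<le> U w" using Lle Uge P0 le_trans by blast
  have Lm: "\<And>a b. a \<in> \<Omega> \<Longrightarrow> b \<in> \<Omega> \<Longrightarrow> preceq I R v a b \<Longrightarrow> L a \<le> L b"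
  proof -
    fix a b assume ab: "a \<in> \<Omega>" "b \<in> \<Omega>" "preceq I R v a b"
    obtain P where "P \<in> S" "P v b = L b" using Lex by blast
    then show "L a \<le> L b" using Lle[of P a] Pm[of P a b] ab by simp
  qed
  have Um: "\<And>a b. a \<in> \<Omega> \<Longrightarrow> b \<in> \<Omega> \<Longrightarrow> preceq I R v a b \<Longrightarrow> U a \<le> U b"
  proof -
    fix a b assume ab: "a \<in> \<Omega>" "b \<in> \<Omega>" "preceq I R v a b"
    obtain P where "P \<in> S" "P v a = U a" using Uex by blast
    then show "U a \<le> U b" using Uge[of P b] Pm[of P a b] ab by simp
  qed
  have Lmp: "\<And>a b. a \<in> \<Omega> \<Longrightarrow> b \<in> \<Omega> \<Longrightarrow> prec I R v a b \<Longrightarrow> L a \<le> L b"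
    using Lm prec_def by blast
  have Ump: "\<And>a b. a \<in> \<Omega> \<Longrightarrow> b \<in> \<Omega> \<Longrightarrow> prec I R v a b \<Longrightarrow> U a \<le> U b"
    using Um prec_def by blast
  have yL: "L \<omega> \<le> y" "y \<le> U \<omega>" using y L_def U_def by auto
  have z1: "L \<omega>' \<le> z" "prec I R v \<omega> \<omega>' \<Longrightarrow> y \<le> z"
    using z lo_le_iff[of "{(\<omega>, y)}" n I m R T v \<omega>' z] L_def by auto
  have z2: "z \<le> U \<omega>'" "prec I R v \<omega>' \<omega> \<Longrightarrow> z \<le> y"
    using z le_up_iff[of "{(\<omega>, y)}" z n I m R T v \<omega>'] U_def by auto
  have loI: "\<And>x c. lo n I m R T v x Ob \<le> c \<longleftrightarrow> L x \<le> c \<and> (prec I R v \<omega> x \<longrightarrow> y \<le> c) \<and> (prec I R v \<omega>' x \<longrightarrow> z \<le> c)"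
    using lo_le_iff[of Ob] unfolding Ob_def L_def by auto
  have upI: "\<And>x c. c \<le> up n I m R T v x Ob \<longleftrightarrow> c \<le> U x \<and> (prec I R v x \<omega> \<longrightarrow> c \<le> y) \<and> (prec I R v x \<omega>' \<longrightarrow> c \<le> z)"
    using le_up_iff[of Ob] unfolding Ob_def U_def by auto
  define fl where "fl x = (if x = \<omega> then y else if x = \<omega>' then z else lo n I m R T v x Ob)" for x
  define fh where "fh x = (if x = \<omega> then y else if x = \<omega>' then z else up n I m R T v x Ob)" for x
  have w1': "\<omega> \<in> \<Omega>" and w2': "\<omega>' \<in> \<Omega>" using w1 w2 \<Omega>_def by auto
  have pirr: "\<And>a. \<not> prec I R v a a" by (simp add: prec_irrefl)
  have ptr1: "\<And>a b c. a \<in> \<Omega> \<Longrightarrow> b \<in> \<Omega> \<Longrightarrow> c \<in> \<Omega> \<Longrightarrow> prec I R v a b \<Longrightarrow> prec I R v b c \<Longrightarrow> prec I R v a c"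
    unfolding \<Omega>_def using prec_trans1 prec_def by blast
  have G: "\<And>b. b \<in> \<Omega> \<Longrightarrow> L b \<le> fl b \<and> (prec I R v \<omega> b \<longrightarrow> y \<le> fl b) \<and> (prec I R v \<omega>' b \<longrightarrow> z \<le> fl b)"
  proof -
    fix b assume b: "b \<in> \<Omega>"
    show "L b \<le> fl b \<and> (prec I R v \<omega> b \<longrightarrow> y \<le> fl b) \<and> (prec I R v \<omega>' b \<longrightarrow> z \<le> fl b)"
    proof (cases "b = \<omega>")
      case True then show ?thesis using yL z2 pirr fl_def by auto
    next
      case nb: False
      show ?thesis
      proof (cases "b = \<omega>'")
        case True then show ?thesis using z1 pirr fl_def nb by auto
      next
        case False
        then have "fl b = lo n I m R T v b Ob" using nb fl_def by simp
        then show ?thesis using loI[of b "fl b"] by simp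
      qed
    qed
  qed
  have G': "\<And>b. b \<in> \<Omega> \<Longrightarrow> fh b \<le> U b \<and> (prec I R v b \<omega> \<longrightarrow> fh b \<le> y) \<and> (prec I R v b \<omega>' \<longrightarrow> fh b \<le> z)"
  proof -
    fix b assume b: "b \<in> \<Omega>"
    show "fh b \<le> U b \<and> (prec I R v b \<omega> \<longrightarrow> fh b \<le> y) \<and> (prec I R v b \<omega>' \<longrightarrow> fh b \<le> z)"
    proof (cases "b = \<omega>")
      case True then show ?thesis using yL z1 pirr fh_def by auto
    next
      case nb: False
      show ?thesis
      proof (cases "b = \<omega>'")
        case True then show ?thesis using z2 pirr fh_def nb by auto
      next
        case False
        then have "fh b = up n I m R T v b Ob" using nb fh_def by simp
        then show ?thesis using upI[of "fh b" b] by simp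
      qed
    qed
  qed
  have mlo: "\<forall>a\<in>\<Omega>. \<forall>b\<in>\<Omega>. preceq I R v a b \<longrightarrow> fl a \<le> fl b"
  proof (intro ballI impI)
    fix a b assume a: "a \<in> \<Omega>" and b: "b \<in> \<Omega>" and ab: "preceq I R v a b"
    show "fl a \<le> fl b"
    proof (cases "a = b")
      case True then show ?thesis by simp
    next
      case False
      then have pab: "prec I R v a b" using ab prec_def by simp
      show ?thesis
      proof (cases "a = \<omega>")
        case True then show ?thesis using G[OF b] pab fl_def by simp
      next
        case na: False
        show ?thesis
        proof (cases "a = \<omega>'")
          case True then show ?thesis using G[OF b] pab fl_def na by simp
        next
          case False
          then have "fl a = lo n I m R T v a Ob" using na fl_def by simp
          moreover have "L a \<le> fl b" using Lmp[OF a b pab] G[OF b] by simp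
          moreover have "prec I R v \<omega> a \<longrightarrow> y \<le> fl b" using ptr1[OF w1' a b _ pab] G[OF b] by blast
          moreover have "prec I R v \<omega>' a \<longrightarrow> z \<le> fl b" using ptr1[OF w2' a b _ pab] G[OF b] by blast
          ultimately show ?thesis using loI[of a "fl b"] by simp
        qed
      qed
    qed
  qed
  have mhi: "\<forall>a\<in>\<Omega>. \<forall>b\<in>\<Omega>. preceq I R v a b \<longrightarrow> fh a \<le> fh b"
  proof (intro ballI impI)
    fix a b assume a: "a \<in> \<Omega>" and b: "b \<in> \<Omega>" and ab: "preceq I R v a b"
    show "fh a \<le> fh b"
    proof (cases "a = b")
      case True then show ?thesis by simp
    next
      case False
      then have pab: "prec I R v a b" using ab prec_def by simp
      show ?thesis
      proof (cases "b = \<omega>")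
        case True then show ?thesis using G'[OF a] pab fh_def by simp
      next
        case nb: False
        show ?thesis
        proof (cases "b = \<omega>'")
          case True then show ?thesis using G'[OF a] pab fh_def nb by simp
        next
          case False
          then have "fh b = up n I m R T v b Ob" using nb fh_def by simp
          moreover have "fh a \<le> U b" using Ump[OF a b pab] G'[OF a] by simp
          moreover have "prec I R v b \<omega> \<longrightarrow> fh a \<le> y" using ptr1[OF a b w1' pab] G'[OF a] by blast
          moreover have "prec I R v b \<omega>' \<longrightarrow> fh a \<le> z" using ptr1[OF a b w2' pab] G'[OF a] by blast
          ultimately show ?thesis using upI[of "fh a" b] by simp
        qed
      qed
    qed
  qed
  have lehi: "\<forall>a\<in>\<Omega>. fl a \<le> fh a"
  proof
    fix a assume a: "a \<in> \<Omega>"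
    show "fl a \<le> fh a"
    proof (cases "a = \<omega> \<or> a = \<omega>'")
      case True then show ?thesis using fl_def fh_def by auto
    next
      case False
      then have e1: "fl a = lo n I m R T v a Ob" and e2: "fh a = up n I m R T v a Ob"
        using fl_def fh_def by auto
      have c1: "L a \<le> up n I m R T v a Ob"
      proof -
        have "L a \<le> U a" by (rule LU)
        moreover have "prec I R v a \<omega> \<longrightarrow> L a \<le> y" using Lmp[OF a w1'] yL(1) by auto
        moreover have "prec I R v a \<omega>' \<longrightarrow> L a \<le> z" using Lmp[OF a w2'] z1(1) by auto
        ultimately show ?thesis using upI[of "L a" a] by blast
      qed
      have c2: "prec I R v \<omega> a \<longrightarrow> y \<le> up n I m R T v a Ob"
      proof
        assume p: "prec I R v \<omega> a"
        have "y \<le> U a" using Ump[OF w1' a p] yL(2) by simp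
        moreover have "prec I R v a \<omega>' \<longrightarrow> y \<le> z" using ptr1[OF w1' a w2' p] z1(2) by blast
        ultimately show "y \<le> up n I m R T v a Ob" using upI[of y a] by simp
      qed
      have c3: "prec I R v \<omega>' a \<longrightarrow> z \<le> up n I m R T v a Ob"
      proof
        assume p: "prec I R v \<omega>' a"
        have "z \<le> U a" using Ump[OF w2' a p] z2(1) by simp
        moreover have "prec I R v a \<omega> \<longrightarrow> z \<le> y" using ptr1[OF w2' a w1' p] z2(2) by blast
        ultimately show "z \<le> up n I m R T v a Ob" using upI[of z a] by simp
      qed
      show ?thesis using e1 e2 c1 c2 c3 loI by simp
    qed
  qed
  obtain x0 where x0: "x0 \<in> \<Omega> - {\<omega>, \<omega>'}" "lo n I m R T v x0 Ob < up n I m R T v x0 Ob"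
    using ex Ob_def \<Omega>_def by blast
  have x0': "x0 \<in> \<Omega>" "fl x0 < fh x0" using x0 fl_def fh_def by auto
  have obs: "\<And>u. (u,v,Obs)\<in>R \<Longrightarrow> u \<in> reg I v \<and> 1 \<le> m u"
  proof -
    fix u assume u: "(u,v,Obs)\<in>R"
    have "P0 \<in> Pconstr n I m (u,v,Obs)" using pR_constr P0 S_def u by blast
    then have "\<exists>k\<in>{1..m u}. True" unfolding Pconstr_def by auto
    then show "u \<in> reg I v \<and> 1 \<le> m u" using wf_reg[OF assms(2) u] by auto
  qed
  note C = core[where I=I and v=v and m=m and R=R and fl=fl and fh=fh and xs=x0, OF fin_reg[OF assms(1)] mlo[unfolded \<Omega>_def] mhi[unfolded \<Omega>_def] lehi[unfolded \<Omega>_def]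
         x0'(1)[unfolded \<Omega>_def] x0'(2)]
  have CE: "\<exists>F. (\<forall>a\<in>Omega I m v. \<forall>b\<in>Omega I m v. preceq I R v a b \<longrightarrow> F a \<le> F b)
           \<and> (\<forall>a\<in>Omega I m v. fl a \<le> F a \<and> F a \<le> fh a)
           \<and> (\<forall>u. (u,v,Obs)\<in>R \<longrightarrow> dep I m v F u)"
  proof (rule C)
    fix u assume "(u,v,Obs)\<in>R" then show "u \<in> reg I v \<and> 1 \<le> m u" by (rule obs)
  qed
  from CE obtain F where Fm0: "\<forall>a\<in>Omega I m v. \<forall>b\<in>Omega I m v. preceq I R v a b \<longrightarrow> F a \<le> F b"
    and Fb0: "\<forall>a\<in>Omega I m v. fl a \<le> F a \<and> F a \<le> fh a"
    and Fd: "\<forall>u. (u,v,Obs)\<in>R \<longrightarrow> dep I m v F u"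
    by (elim exE conjE)
  have Fm: "\<forall>a\<in>\<Omega>. \<forall>b\<in>\<Omega>. preceq I R v a b \<longrightarrow> F a \<le> F b" using Fm0 unfolding \<Omega>_def .
  have Fb: "\<forall>a\<in>\<Omega>. fl a \<le> F a \<and> F a \<le> fh a" using Fb0 unfolding \<Omega>_def .
  have FL: "\<And>a. a \<in> \<Omega> \<Longrightarrow> L a \<le> F a" using G Fb le_trans by blast
  have FU: "\<And>a. a \<in> \<Omega> \<Longrightarrow> F a \<le> U a" using G' Fb le_trans by blast
  define Q where "Q v' w = (if v' = v \<and> w \<in> \<Omega> then F w else P0 v' w)" for v' w
  have QP: "Q \<in> Params n I m"
  proof -
    have P0P: "P0 \<in> Params n I m" using P0 S_def pR_Params by blast
    have "F w \<le> m v" if "w \<in> \<Omega>" for w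
    proof -
      obtain P where PS: "P \<in> S" and PU: "P v w = U w" using Uex by blast
      have "P \<in> Params n I m" using PS S_def pR_Params by blast
      then have "P v w \<le> m v" by (rule Params_bnd)
      then have "U w \<le> m v" using PU by simp
      then show ?thesis using FU[OF that] by simp
    qed
    then show ?thesis using P0P v unfolding Params_def Q_def \<Omega>_def by auto
  qed
  have Qv: "\<And>v'. v' \<noteq> v \<Longrightarrow> Q v' = P0 v'" unfolding Q_def by auto
  have Qlo: "\<And>w. \<exists>P\<in>S. P v w \<le> Q v w"
  proof -
    fix w show "\<exists>P\<in>S. P v w \<le> Q v w"
    proof (cases "w \<in> \<Omega>")
      case True
      obtain P where PS: "P \<in> S" and PL: "P v w = L w" using Lex by blast
      have "P v w \<le> Q v w" using PL FL[OF True] True by (simp add: Q_def)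
      then show ?thesis using PS by blast
    next
      case False then show ?thesis using P0 Q_def by auto
    qed
  qed
  have Qhi: "\<And>w. \<exists>P\<in>S. Q v w \<le> P v w"
  proof -
    fix w show "\<exists>P\<in>S. Q v w \<le> P v w"
    proof (cases "w \<in> \<Omega>")
      case True
      obtain P where PS: "P \<in> S" and PU: "P v w = U w" using Uex by blast
      have "Q v w \<le> P v w" using PU FU[OF True] True by (simp add: Q_def)
      then show ?thesis using PS by blast
    next
      case False then show ?thesis using P0 Q_def by auto
    qed
  qed
  have Qt: "\<forall>t\<in>T. Q \<in> Ptrans n I m t"
  proof
    fix t assume t: "t \<in> T"
    obtain x v' b y' where tt: "t = (x, v', b, y')" by (cases t) auto
    show "Q \<in> Ptrans n I m t"
    proof (cases "v' = v")
      case True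
      obtain P1 where P1: "P1 \<in> S" "P1 v (omega_of I v x) \<le> Q v (omega_of I v x)" using Qlo by blast
      obtain P2 where P2: "P2 \<in> S" "Q v (omega_of I v x) \<le> P2 v (omega_of I v x)" using Qhi by blast
      have h1: "P1 \<in> Ptrans n I m (x, v, b, y')" using P1(1) t tt True pR_trans S_def by blast
      have h2: "P2 \<in> Ptrans n I m (x, v, b, y')" using P2(1) t tt True pR_trans S_def by blast
      show ?thesis unfolding tt True by (rule trans_transfer[OF h1 h2 QP P1(2) P2(2)])
    next
      case False
      have h: "P0 \<in> Ptrans n I m (x, v', b, y')" using P0 t tt pR_trans S_def by blast
      show ?thesis unfolding tt by (rule trans_same[OF h QP Qv[OF False]])
    qed
  qed
  have Qc: "\<forall>r\<in>R. Q \<in> Pconstr n I m r"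
  proof
    fix r assume r: "r \<in> R"
    obtain u v' c where rr: "r = (u, v', c)" by (cases r) auto
    show "Q \<in> Pconstr n I m r"
    proof (cases "v' = v")
      case False
      have h: "P0 \<in> Pconstr n I m (u, v', c)" using P0 r rr pR_constr S_def by blast
      show ?thesis unfolding rr by (rule constr_same[OF h QP Qv[OF False]])
    next
      case True
      have u: "u \<in> reg I v" using wf_reg[OF assms(2)] r rr True by blast
      have upd: "\<And>w k. w \<in> \<Omega> \<Longrightarrow> k \<le> m u \<Longrightarrow> w(u:=k) \<in> \<Omega>" using Omega_upd u \<Omega>_def by blast
      show ?thesis
      proof (cases c)
        case Act
        have "\<forall>w\<in>\<Omega>. \<forall>k\<in>{1..m u}. Q v (w(u := k - 1)) \<le> Q v (w(u := k))"
        proof (intro ballI)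
          fix w k assume w: "w \<in> \<Omega>" and k: "k \<in> {1..m u}"
          have "preceq I R v (w(u:=k-1)) (w(u:=k))" using step_act r rr True Act by blast
          moreover have m1: "w(u:=k-1) \<in> \<Omega>" using k by (intro upd[OF w]) auto
          moreover have m2: "w(u:=k) \<in> \<Omega>" using k by (intro upd[OF w]) auto
          ultimately have "F (w(u := k - 1)) \<le> F (w(u := k))" using Fm by blast
          then show "Q v (w(u := k - 1)) \<le> Q v (w(u := k))" using m1 m2 by (simp add: Q_def)
        qed
        then show ?thesis unfolding rr True Act Pconstr_def using QP \<Omega>_def by auto
      next
        case Inh
        have nA: "(u,v,Act) \<notin> R" using wf_notboth[OF assms(2)] r rr True Inh by blast
        have "\<forall>w\<in>\<Omega>. \<forall>k\<in>{1..m u}. Q v (w(u := k)) \<le> Q v (w(u := k - 1))"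
        proof (intro ballI)
          fix w k assume w: "w \<in> \<Omega>" and k: "k \<in> {1..m u}"
          have "preceq I R v (w(u:=k)) (w(u:=k-1))" using step_inh nA r rr True Inh by blast
          moreover have m1: "w(u:=k-1) \<in> \<Omega>" using k by (intro upd[OF w]) auto
          moreover have m2: "w(u:=k) \<in> \<Omega>" using k by (intro upd[OF w]) auto
          ultimately have "F (w(u := k)) \<le> F (w(u := k - 1))" using Fm by blast
          then show "Q v (w(u := k)) \<le> Q v (w(u := k - 1))" using m1 m2 by (simp add: Q_def)
        qed
        then show ?thesis unfolding rr True Inh Pconstr_def using QP \<Omega>_def by auto
      next
        case Obs
        have "dep I m v F u" using Fd r rr True Obs by blast
        then obtain w k where w: "w \<in> \<Omega>" and k: "k \<in> {1..m u}" and d: "F (w(u:=k)) \<noteq> F (w(u:=k-1))"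
          unfolding dep_def \<Omega>_def by blast
        have m1: "w(u:=k-1) \<in> \<Omega>" using k by (intro upd[OF w]) auto
        have m2: "w(u:=k) \<in> \<Omega>" using k by (intro upd[OF w]) auto
        have "Q v (w(u:=k)) \<noteq> Q v (w(u:=k-1))" using d m1 m2 by (simp add: Q_def)
        then have "\<exists>w\<in>Omega I m v. \<exists>k\<in>{1..m u}. Q v (w(u:=k)) \<noteq> Q v (w(u:=k-1))"
          using w k \<Omega>_def by blast
        then show ?thesis unfolding rr True Obs Pconstr_def using QP by simp
      qed
    qed
  qed
  have QS: "Q \<in> pR n I m R T" unfolding pR_def p_def using QP Qt Qc by auto
  have "fl \<omega> \<le> F \<omega>" "F \<omega> \<le> fh \<omega>" "fl \<omega>' \<le> F \<omega>'" "F \<omega>' \<le> fh \<omega>'" using Fb w1' w2' by auto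
  then have Fy: "F \<omega> = y" and Fz: "F \<omega>' = z" using fl_def fh_def ne by auto
  have "Q v \<omega> = y" using w1' Fy by (simp add: Q_def)
  moreover have "Q v \<omega>' = z" using w2' Fz by (simp add: Q_def)
  ultimately show "\<exists>P\<in>pR n I m R T. P v \<omega> = y \<and> P v \<omega>' = z"
    using QS by blast
qed

end
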